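(* For integers $m,n\ge 0$ let $p_m(n)=\prod_{1\le i\le j\le m-1}\frac{2n+i+j}{i+j}$. Then $p_m(0)=1$ and $p_m(1)=C_m$ for all $m\ge 0$, and for all $m\ge 0$, $n\ge 2$, $$p_m(n-1)p_{m+2}(n-1)-p_{m+1}(n-1)^2=p_m(n)\,p_{m+2}(n-2).$$ Moreover, these numbers are uniquely determined by this recursion and these initial values: if $(q_m(n))_{m,n\ge 0}$ is any family of complex numbers with $q_m(0)=1$, $q_m(1)=C_m$ for all $m\ge0$ and $q_m(n-1)q_{m+2}(n-1)-q_{m+1}(n-1)^2=q_m(n)\,q_{m+2}(n-2)$ for all $m\ge 0$, $n\ge 2$, then $q_m(n)=p_m(n)$ for all $m,n\ge 0$.
   Context: $C_m=\frac{1}{m+1}\binom{2m}{m}$ denotes the $m$-th Catalan number. Empty products equal $1$. It is known that $p_m(n)=\det(C_{m+i+j})_{i,j=0}^{n-1}$ for all integers $m,n\ge 0$. *)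

theory Defs
  imports Complex_Main
begin

definition catalan :: "nat \<Rightarrow> complex" where
  "catalan m = of_nat ((2*m) choose m) / of_nat (m+1)"

text \<open>p_m(n) = product over 1 <= i <= j <= m-1 of (2n+i+j)/(i+j).
  The condition j <= m-1 is written j+1 <= m to avoid truncated subtraction
  (for m = 0 the product is empty).\<close>
definition p :: "nat \<Rightarrow> nat \<Rightarrow> complex" where
  "p m n = (\<Prod>(i,j)\<in>{(i,j). 1 \<le> i \<and> i \<le> j \<and> j + 1 \<le> m}.
              of_nat (2*n + i + j) / of_nat (i + j))"

end

theory Submission
  imports Defs
begin
definition Pr :: "complex \<Rightarrow> nat \<Rightarrow> complex" where
  "Pr c m = (\<Prod>i\<in>{1..m}. c + of_nat i)"

lemma Pr_Suc: "Pr c (Suc m) = Pr c m * (c + of_nat (Suc m))"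
  by (simp add: Pr_def prod.cl_ivl_Suc)

lemma L1: "Pr (c+2) m * ((c+1)*(c+2)) = Pr c m * ((c+of_nat m+1)*(c+of_nat m+2))"
proof (induction m)
  case 0 then show ?case by (simp add: Pr_def)
next
  case (Suc m)
  have "Pr (c+2) (Suc m) * ((c+1)*(c+2)) = (Pr (c+2) m * ((c+1)*(c+2))) * (c+2+of_nat(Suc m))"
    by (simp add: Pr_Suc mult_ac)
  also have "\<dots> = Pr c m * ((c+of_nat m+1)*(c+of_nat m+2)) * (c+2+of_nat(Suc m))" using Suc by simp
  also have "\<dots> = Pr c (Suc m) * ((c+of_nat (Suc m)+1)*(c+of_nat (Suc m)+2))"
    by (simp add: Pr_Suc algebra_simps)
  finally show ?case .
qed

lemma L2: "Pr (c+1) (Suc m) * (c+1) = Pr c m * ((c+of_nat m+1)*(c+of_nat m+2))"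
proof (induction m)
  case 0 then show ?case by (simp add: Pr_def algebra_simps)
next
  case (Suc m)
  have "Pr (c+1) (Suc (Suc m)) * (c+1) = (Pr (c+1) (Suc m) * (c+1)) * (c+1+of_nat(Suc (Suc m)))"
    by (simp only: Pr_Suc[of "c+1" "Suc m"] mult_ac)
  also have "\<dots> = Pr c m * ((c+of_nat m+1)*(c+of_nat m+2)) * (c+1+of_nat(Suc (Suc m)))" using Suc by simp
  also have "\<dots> = Pr c (Suc m) * ((c+of_nat (Suc m)+1)*(c+of_nat (Suc m)+2))"
    by (simp add: Pr_Suc algebra_simps)
  finally show ?case .
qed

lemma L1n: "Pr (of_nat (c+2)) m * (of_nat(c+1)*of_nat(c+2)) = Pr (of_nat c) m * (of_nat(c+m+1)*of_nat(c+m+2))"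
  using L1[of "of_nat c" m] by (simp add: add_ac)

lemma L2n: "Pr (of_nat (c+1)) (Suc m) * of_nat(c+1) = Pr (of_nat c) m * (of_nat(c+m+1)*of_nat(c+m+2))"
  using L2[of "of_nat c" m] by (simp add: add_ac)

lemma Pr_nz: "Pr (of_nat k) m \<noteq> 0"
proof -
  have "\<forall>i\<in>{1..m}. (of_nat k + of_nat i :: complex) \<noteq> 0"
  proof
    fix i assume "i \<in> {1..m}"
    then have "k + i \<noteq> 0" by auto
    then have "(of_nat (k+i) :: complex) \<noteq> 0" by (simp only: of_nat_eq_0_iff not_False_eq_True)
    then show "(of_nat k + of_nat i :: complex) \<noteq> 0" by simp
  qed
  then show ?thesis unfolding Pr_def by (simp only: prod_zero_iff finite_atLeastAtMost) blast
qed

lemma p_0: "p 0 n = 1" by (simp add: p_def)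

lemma p_Suc: "p (Suc m) n = p m n * (Pr (of_nat (2*n+m)) m / Pr (of_nat m) m)"
proof -
  let ?S = "\<lambda>m. {(i,j). 1 \<le> i \<and> i \<le> j \<and> j + 1 \<le> (m::nat)}"
  let ?f = "\<lambda>(i,j). (of_nat (2*n + i + j) / of_nat (i + j) :: complex)"
  have S: "?S (Suc m) = ?S m \<union> (\<lambda>i. (i,m)) ` {1..m}" by (auto simp: image_iff)
  have fin: "finite (?S m)" by (rule finite_subset[of _ "{0..m}\<times>{0..m}"]) auto
  have dis: "?S m \<inter> (\<lambda>i. (i,m)) ` {1..m} = {}" by auto
  have "p (Suc m) n = prod ?f (?S (Suc m))" by (simp add: p_def)
  also have "\<dots> = prod ?f (?S m) * prod ?f ((\<lambda>i. (i,m)) ` {1..m})"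
    unfolding S by (rule prod.union_disjoint[OF fin _ dis]) simp
  also have "prod ?f ((\<lambda>i. (i,m)) ` {1..m}) = (\<Prod>i\<in>{1..m}. of_nat (2*n+i+m) / of_nat (i+m))"
    by (subst prod.reindex) (auto simp: inj_on_def)
  also have "\<dots> = Pr (of_nat (2*n+m)) m / Pr (of_nat m) m"
    unfolding Pr_def prod_dividef[symmetric] by (rule prod.cong) (simp_all add: add_ac)
  finally show ?thesis by (simp add: p_def)
qed

lemma p_nz: "p m n \<noteq> 0"
proof (induction m)
  case 0 then show ?case by (simp add: p_0)
next
  case (Suc m) then show ?case
    by (metis p_Suc Pr_nz divide_eq_0_iff mult_eq_0_iff)
qed

lemma p_n0: "p m 0 = 1"
proof (induction m)
  case 0 then show ?case by (simp add: p_0)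
next
  case (Suc m)
  have "p (Suc m) 0 = p m 0 * (Pr (of_nat (2*0+m)) m / Pr (of_nat m) m)" by (rule p_Suc)
  also have "\<dots> = 1" using Suc Pr_nz[of m m] by simp
  finally show ?case .
qed

lemma p_2: "p 2 n = of_nat n + 1"
  by (simp add: numeral_2_eq_2 p_Suc p_0 Pr_def field_simps)

lemma nat_aux: "(A::nat)*s = t*B \<Longrightarrow> B = C \<Longrightarrow> C*s = u*D \<Longrightarrow> A*(s*s) = D*(u*t)"
  by (metis mult.assoc mult.commute)

lemma binom_rel: "(Suc (Suc (2*m)) choose Suc m) * (Suc m * Suc m) = ((2*m) choose m) * (Suc (2*m) * Suc (Suc (2*m)))"
proof -
  have 1: "(Suc (Suc (2*m)) choose Suc m) * Suc m = Suc (Suc (2*m)) * (Suc (2*m) choose m)"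
    by (rule Suc_times_binomial_eq[symmetric])
  have 2: "(Suc (2*m) choose Suc m) * Suc m = Suc (2*m) * ((2*m) choose m)"
    by (rule Suc_times_binomial_eq[symmetric])
  have e: "Suc (2*m) - m = Suc m" by simp
  have 3: "Suc (2*m) choose m = Suc (2*m) choose (Suc m)"
    using binomial_symmetric[of m "Suc (2*m)"] unfolding e by simp
  show ?thesis by (rule nat_aux[OF 1 3 2])
qed

lemma fld_aux: "u \<noteq> 0 \<Longrightarrow> v \<noteq> 0 \<Longrightarrow> (Q0::complex) \<noteq> 0 \<Longrightarrow>
  Y / u * (Q0 * P / (u*v) / Q0) = Y * P / (u*u) / v"
  by (simp add: field_simps)

lemma cat_alg:
  fixes X Y Q0 Q1 :: complex and m :: nat
  assumes "X * (of_nat (Suc m) * of_nat(Suc m)) = Y * (of_nat(Suc(2*m)) * of_nat(Suc(Suc(2*m))))"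
    "Q1 * (of_nat(m+1)*of_nat(m+2)) = Q0 * (of_nat(m+m+1)*of_nat(m+m+2))" "Q0 \<noteq> 0"
  shows "Y / of_nat(m+1) * (Q1/Q0) = X / of_nat(Suc m + 1)"
proof -
  have a: "X * ((of_nat m+1) * (of_nat m+1)) = Y * ((2*of_nat m+1) * (2*of_nat m+2))"
    using assms(1) by (simp add: add_ac)
  have b: "Q1 * ((of_nat m+1)*(of_nat m+2)) = Q0 * ((2*of_nat m+1) * (2*of_nat m+2))"
    using assms(2) by (simp add: algebra_simps)
  have n1: "(of_nat m + 1 :: complex) \<noteq> 0" using of_nat_neq_0[of m] by (simp add: add_ac)
  have "(of_nat (m+2) :: complex) \<noteq> 0" by (simp only: of_nat_eq_0_iff)
  then have n2: "(of_nat m + 2 :: complex) \<noteq> 0" by (simp add: add.commute)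
  have q: "Q1 = Q0 * ((2*of_nat m+1) * (2*of_nat m+2)) / ((of_nat m+1)*(of_nat m+2))"
    using b n1 n2 by (subst eq_divide_eq) simp
  have x: "X = Y * ((2*of_nat m+1) * (2*of_nat m+2)) / ((of_nat m+1) * (of_nat m+1))"
    using a n1 by (subst eq_divide_eq) simp
  have e: "(of_nat (Suc m + 1) :: complex) = of_nat m + 2" by simp
  have e': "(of_nat (m + 1) :: complex) = of_nat m + 1" by simp
  show ?thesis unfolding q x e e' by (rule fld_aux[OF n1 n2 assms(3)])
qed

lemma p_1: "p m 1 = catalan m"
proof (induction m)
  case 0 then show ?case by (simp add: p_0 catalan_def)
next
  case (Suc m)
  have r: "Pr (of_nat (m+2)) m * (of_nat (m+1)*of_nat (m+2)) = Pr (of_nat m) m * (of_nat(m+m+1)*of_nat(m+m+2))"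
    using L1n[of m m] .
  have b: "of_nat (Suc (Suc (2*m)) choose Suc m) * (of_nat (Suc m)*of_nat (Suc m)) = (of_nat ((2*m) choose m) * (of_nat (Suc (2*m))*of_nat(Suc (Suc (2*m)))) :: complex)"
    using arg_cong[OF binom_rel[of m], of "of_nat :: nat \<Rightarrow> complex"] by (simp only: of_nat_mult)
  have e1: "2*1+m = m+2" by simp
  have e2: "2 * Suc m = Suc (Suc (2*m))" by simp
  have "p (Suc m) 1 = catalan m * (Pr (of_nat (m+2)) m / Pr (of_nat m) m)"
    using p_Suc[of m 1] unfolding e1 Suc .
  also have "\<dots> = catalan (Suc m)"
    unfolding catalan_def e2 by (rule cat_alg[OF b r Pr_nz])
  finally show ?case .
qed
lemma C_alg:
  fixes P2 Q0 P1 Q1 A A1 B B1 bm bm2 :: complex and x x' d d' e e' w w' :: nat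
  assumes h1: "A*of_nat x = A1*of_nat d" and h2: "B1*of_nat x' = B*of_nat e"
    and h3: "P2*Q0*of_nat d' = P1*Q1*of_nat w"
    and "x' = x" "d' = d" "x \<noteq> 0" "e' = e" "w' = w"
  shows "(P2*(A/bm)) * (Q0*(B/bm2)) * of_nat e' = (P1*(A1/bm))*(Q1*(B1/bm2))*of_nat w'"
proof -
  have h2': "B1*of_nat x = B*of_nat e" using h2 assms by simp
  have h3': "P2*Q0*of_nat d = P1*Q1*of_nat w" using h3 assms by simp
  have "P2*A*Q0*B*of_nat e * of_nat x = P1*A1*Q1*B1*of_nat w * (of_nat x::complex)"
  proof -
    have "P2*A*Q0*B*of_nat e * of_nat x = (P2*Q0*of_nat d) * A1*B*(of_nat e::complex)"
      using h1 by (simp add: mult_ac)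
    also have "\<dots> = P1*Q1*of_nat w * A1*B*of_nat e" using h3' by simp
    also have "\<dots> = P1*A1*Q1*(B1*of_nat x)*of_nat w" using h2' by (simp add: mult_ac)
    finally show ?thesis by (simp add: mult_ac)
  qed
  then have "P2*A*Q0*B*of_nat e = P1*A1*Q1*B1*(of_nat w :: complex)"
    using \<open>x \<noteq> 0\<close> by simp
  then show ?thesis using assms by (simp add: field_simps)
qed

lemma Cm: "p m (k+2) * p (m+2) k * (of_nat(2*k+2*m+3)*of_nat(2*k+2*m+4)) = p m (k+1) * p (m+2) (k+1) * (of_nat(2*k+2)*of_nat(2*k+3))"
proof (induction m)
  case 0
  show ?case unfolding p_0 add_0 p_2 by (simp add: algebra_simps)
next
  case (Suc m)
  have IH: "p m (k+2) * p (m+2) k * of_nat((2*k+2*m+3)*(2*k+2*m+4)) = p m (k+1) * p (m+2) (k+1) * of_nat((2*k+2)*(2*k+3))"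
    using Suc by (simp only: of_nat_mult)
  have e1: "2*(k+1)+m+2 = 2*(k+2)+m" by simp
  have f1: "Pr (of_nat (2*(k+2)+m)) m * of_nat((2*(k+1)+m+1)*(2*(k+2)+m)) = Pr (of_nat (2*(k+1)+m)) m * of_nat((2*(k+1)+m+m+1)*(2*(k+1)+m+m+2))"
    using L1n[of "2*(k+1)+m" m] unfolding e1 by (simp only: of_nat_mult)
  have e2: "2*k+(m+2)+2 = 2*(k+1)+(m+2)" by simp
  have f2: "Pr (of_nat (2*(k+1)+(m+2))) (m+2) * of_nat((2*k+(m+2)+1)*(2*(k+1)+(m+2))) = Pr (of_nat (2*k+(m+2))) (m+2) * of_nat((2*k+(m+2)+(m+2)+1)*(2*k+(m+2)+(m+2)+2))"
    using L1n[of "2*k+(m+2)" "m+2"] unfolding e2 by (simp only: of_nat_mult)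
  have "p (Suc m) (k+2) * p (Suc (m+2)) k * of_nat((2*k+2*Suc m+3)*(2*k+2*Suc m+4)) = p (Suc m) (k+1) * p (Suc (m+2)) (k+1) * of_nat((2*k+2)*(2*k+3))"
    unfolding p_Suc[of m "k+2"] p_Suc[of "m+2" k] p_Suc[of m "k+1"] p_Suc[of "m+2" "k+1"]
    by (rule C_alg[OF f1 f2 IH]) (simp_all add: algebra_simps)
  moreover have "Suc m + 2 = Suc (m+2)" by simp
  ultimately show ?case by (simp only: of_nat_mult)
qed

lemma main_alg:
  fixes P0 L r0 r1 x y :: complex
  assumes H1: "r1 * ((2*x+y+3)*((2*y+1)*(2*y+2))) = r0*(((2*x+2*y+3)*(2*x+2*y+4))*(y+1))"
    and H2: "L * ((2*x+2*y+3)*(2*x+2*y+4)) = P0*(P0*r0*r1)*((2*x+2)*(2*x+3))"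
    and nz: "(2*x+2*y+3)*(2*x+2*y+4)*(y+1) \<noteq> 0"
  shows "P0*(P0*r0*r1) - (P0*r0)^2 = L"
proof -
  have "(P0*(P0*r0*r1) - (P0*r0)^2) * ((2*x+2*y+3)*(2*x+2*y+4)*(y+1)) = L * ((2*x+2*y+3)*(2*x+2*y+4)*(y+1))"
    using H1 H2 by algebra
  then show ?thesis using nz by simp
qed
lemma r_alg:
  fixes a0 a1 b0 b1 :: complex and k m :: nat
  assumes ha: "a1 * of_nat (2*(k+1)+Suc m) = a0*(of_nat(2*(k+1)+m+m+1)*of_nat(2*(k+1)+m+m+2))"
    and hb: "b1 * of_nat(Suc m) = b0*(of_nat(m+m+1)*of_nat(m+m+2))" and nz: "b0 \<noteq> 0" "b1 \<noteq> 0"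
  shows "(a1/b1) * ((2*of_nat k+of_nat m+3)*((2*of_nat m+1)*(2*of_nat m+2))) = (a0/b0)*(((2*of_nat k+2*of_nat m+3)*(2*of_nat k+2*of_nat m+4))*(of_nat m+1))"
proof -
  have ha': "a1 * (2*of_nat k+of_nat m+3) = a0*((2*of_nat k+2*of_nat m+3)*(2*of_nat k+2*of_nat m+4))"
    using ha by (simp add: algebra_simps)
  have hb': "b1 * (of_nat m + 1) = b0*((2*of_nat m+1)*(2*of_nat m+2))"
    using hb by (simp add: algebra_simps)
  have "a1*((2*of_nat k+of_nat m+3)*((2*of_nat m+1)*(2*of_nat m+2))) * b0 = a0*(((2*of_nat k+2*of_nat m+3)*(2*of_nat k+2*of_nat m+4))*(of_nat m+1)) * b1"
    using ha' hb' by algebra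
  then show ?thesis using nz by (simp add: field_simps)
qed

lemma p_rec: "p m (k+1) * p (m+2) (k+1) - p (m+1) (k+1)^2 = p m (k+2) * p (m+2) k"
proof -
  define a0 where "a0 = Pr (of_nat (2*(k+1)+m)) m"
  define b0 where "b0 = Pr (of_nat m) m"
  define a1 where "a1 = Pr (of_nat (2*(k+1)+Suc m)) (Suc m)"
  define b1 where "b1 = Pr (of_nat (Suc m)) (Suc m)"
  have e1: "m+1 = Suc m" "m+2 = Suc (Suc m)" by simp_all
  have pm1: "p (m+1) (k+1) = p m (k+1) * (a0/b0)"
    unfolding e1 a0_def b0_def by (rule p_Suc)
  have pm2: "p (m+2) (k+1) = p m (k+1) * (a0/b0) * (a1/b1)"
    unfolding e1 a1_def b1_def using p_Suc[of "Suc m" "k+1"] pm1 e1 by simp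
  have e: "2*(k+1)+m+1 = 2*(k+1)+Suc m" by simp
  have ha: "a1 * of_nat (2*(k+1)+Suc m) = a0*(of_nat(2*(k+1)+m+m+1)*of_nat(2*(k+1)+m+m+2))"
    using L2n[of "2*(k+1)+m" m] unfolding e a0_def a1_def .
  have e': "m+1 = Suc m" by simp
  have hb: "b1 * of_nat(Suc m) = b0*(of_nat(m+m+1)*of_nat(m+m+2))"
    using L2n[of m m] unfolding e' b0_def b1_def .
  note H1 = r_alg[OF ha hb Pr_nz[of m m, folded b0_def] Pr_nz[of "Suc m" "Suc m", folded b1_def]]
  note C = Cm[of m k]
  have H2: "(p m (k+2) * p (m+2) k) * ((2*of_nat k+2*of_nat m+3)*(2*of_nat k+2*of_nat m+4)) = p m (k+1) * (p m (k+1) * (a0/b0) * (a1/b1)) * ((2*of_nat k+2)*(2*of_nat k+3))"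
    using C unfolding pm2 by (simp add: algebra_simps)
  have "of_nat((2*k+2*m+3)*(2*k+2*m+4)*(m+1)) \<noteq> (0::complex)" by (simp only: of_nat_eq_0_iff) simp
  then have nz: "(2*of_nat k+2*of_nat m+3)*(2*of_nat k+2*of_nat m+4)*(of_nat m+1) \<noteq> (0::complex)"
    by (simp add: algebra_simps)
  have "p m (k+1) * (p m (k+1) * (a0/b0) * (a1/b1)) - (p m (k+1) * (a0/b0))^2 = p m (k+2) * p (m+2) k"
    by (rule main_alg[OF H1 H2 nz])
  then show ?thesis unfolding pm1 pm2 .
qed

lemma uniq:
  fixes q :: "nat \<Rightarrow> nat \<Rightarrow> complex"
  assumes h0: "\<forall>m. q m 0 = 1" and h1: "\<forall>m. q m 1 = catalan m"
    and hr: "\<forall>m n. 2 \<le> n \<longrightarrow> q m (n-1) * q (m+2) (n-1) - q (m+1) (n-1) ^ 2 = q m n * q (m+2) (n-2)"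
  shows "q m n = p m n"
proof (induction n arbitrary: m rule: less_induct)
  case (less n)
  show ?case
  proof (cases "n < 2")
    case True
    then have "n = 0 \<or> n = 1" by auto
    then show ?thesis using h0 h1 p_n0 p_1 by auto
  next
    case False
    then obtain k where n: "n = k+2" by (metis add.commute le_Suc_ex not_less)
    have r: "q m (k+1) * q (m+2) (k+1) - q (m+1) (k+1) ^ 2 = q m (k+2) * q (m+2) k"
      using hr[rule_format, of "k+2" m] by simp
    have i1: "\<And>x. q x (k+1) = p x (k+1)" using less n by simp
    have i2: "q (m+2) k = p (m+2) k" using less n by simp
    have "q m (k+2) * p (m+2) k = p m (k+2) * p (m+2) k"
      using r p_rec[of m k] unfolding i1 i2 by simp
    then show ?thesis using p_nz[of "m+2" k] n by simp
  qed
qed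

theorem lemma2:
  shows "(\<forall>m. p m 0 = 1) \<and> (\<forall>m. p m 1 = catalan m)
    \<and> (\<forall>m n. 2 \<le> n \<longrightarrow>
          p m (n-1) * p (m+2) (n-1) - p (m+1) (n-1) ^ 2 = p m n * p (m+2) (n-2))
    \<and> (\<forall>q :: nat \<Rightarrow> nat \<Rightarrow> complex.
          (\<forall>m. q m 0 = 1) \<and> (\<forall>m. q m 1 = catalan m)
          \<and> (\<forall>m n. 2 \<le> n \<longrightarrow>
               q m (n-1) * q (m+2) (n-1) - q (m+1) (n-1) ^ 2 = q m n * q (m+2) (n-2))
          \<longrightarrow> (\<forall>m n. q m n = p m n))"
proof (intro conjI allI impI)
  fix m show "p m 0 = 1" by (rule p_n0)
next
  fix m show "p m 1 = catalan m" by (rule p_1)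
next
  fix m n :: nat assume "2 \<le> n"
  then obtain k where n: "n = k+2" by (metis add.commute le_Suc_ex)
  have a: "k+2 - 1 = k+1" "k+2 - 2 = k" by simp_all
  show "p m (n-1) * p (m+2) (n-1) - p (m+1) (n-1) ^ 2 = p m n * p (m+2) (n-2)"
    unfolding n a by (rule p_rec)
next
  fix q :: "nat \<Rightarrow> nat \<Rightarrow> complex" and m n
  assume "(\<forall>m. q m 0 = 1) \<and> (\<forall>m. q m 1 = catalan m)
          \<and> (\<forall>m n. 2 \<le> n \<longrightarrow>
               q m (n-1) * q (m+2) (n-1) - q (m+1) (n-1) ^ 2 = q m n * q (m+2) (n-2))"
  then show "q m n = p m n" using uniq by blast
qed
end
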